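(* Let $t \geq 5$ be an integer. If $G$ is a connected graph on $n$ vertices satisfying $\sigma_2(G) > \frac{t-3}{t-2}n$, then $G$ has either a Hamiltonian path or an induced subgraph isomorphic to $K_{1,t}$.
   Context: All graphs are finite and simple. A Hamiltonian path of $G$ is a path containing all vertices of $G$. For a graph $G$, $\sigma_2(G)$ denotes the minimum of $\deg(x)+\deg(y)$ over all pairs of distinct nonadjacent vertices $x,y$ of $G$. $K_{1,t}$ denotes the star with one center vertex adjacent to $t$ pairwise nonadjacent leaves. *)

theory Defs
  imports Complex_Main
begin

definition simple_graph :: "'a set \<Rightarrow> ('a \<Rightarrow> 'a \<Rightarrow> bool) \<Rightarrow> bool" where
  "simple_graph V E \<longleftrightarrow> finite V \<and> (\<forall>x y. E x y \<longrightarrow> E y x) \<and> (\<forall>x. \<not> E x x)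
     \<and> (\<forall>x y. E x y \<longrightarrow> x \<in> V \<and> y \<in> V)"

definition degree :: "'a set \<Rightarrow> ('a \<Rightarrow> 'a \<Rightarrow> bool) \<Rightarrow> 'a \<Rightarrow> nat" where
  "degree V E x = card {y \<in> V. E x y}"

definition is_walk :: "'a set \<Rightarrow> ('a \<Rightarrow> 'a \<Rightarrow> bool) \<Rightarrow> 'a list \<Rightarrow> bool" where
  "is_walk V E p \<longleftrightarrow> p \<noteq> [] \<and> set p \<subseteq> V \<and> (\<forall>i. Suc i < length p \<longrightarrow> E (p ! i) (p ! Suc i))"

definition connected_graph :: "'a set \<Rightarrow> ('a \<Rightarrow> 'a \<Rightarrow> bool) \<Rightarrow> bool" where
  "connected_graph V E \<longleftrightarrow> V \<noteq> {} \<and>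
     (\<forall>x\<in>V. \<forall>y\<in>V. \<exists>p. is_walk V E p \<and> hd p = x \<and> last p = y)"

definition hamiltonian_path :: "'a set \<Rightarrow> ('a \<Rightarrow> 'a \<Rightarrow> bool) \<Rightarrow> 'a list \<Rightarrow> bool" where
  "hamiltonian_path V E p \<longleftrightarrow> is_walk V E p \<and> distinct p \<and> set p = V"

text \<open>sigma_2(G) > b, where sigma_2 is the minimum degree sum over distinct
nonadjacent pairs (vacuously true if there are no such pairs, i.e. min of the
empty set is +infinity).\<close>
definition sigma2_gt :: "'a set \<Rightarrow> ('a \<Rightarrow> 'a \<Rightarrow> bool) \<Rightarrow> real \<Rightarrow> bool" where
  "sigma2_gt V E b \<longleftrightarrow> (\<forall>x\<in>V. \<forall>y\<in>V. x \<noteq> y \<and> \<not> E x y \<longrightarrow>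
      real (degree V E x + degree V E y) > b)"

definition has_induced_star :: "'a set \<Rightarrow> ('a \<Rightarrow> 'a \<Rightarrow> bool) \<Rightarrow> nat \<Rightarrow> bool" where
  "has_induced_star V E t \<longleftrightarrow> (\<exists>c L. c \<in> V \<and> L \<subseteq> V \<and> c \<notin> L \<and> card L = t \<and>
     (\<forall>x\<in>L. E c x) \<and> (\<forall>x\<in>L. \<forall>y\<in>L. \<not> E x y))"

end

theory Submission
  imports Defs
begin

lemma walk_iff: "is_walk V E p \<longleftrightarrow> p \<noteq> [] \<and> set p \<subseteq> V \<and> successively E p"
  by (simp add: is_walk_def successively_conv_nth)

lemma succ_cross:
  assumes "successively E W" "W \<noteq> []" "hd W \<in> S" "last W \<notin> S"
  shows "\<exists>u v. u \<in> S \<and> v \<notin> S \<and> u \<in> set W \<and> v \<in> set W \<and> E u v"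
  using assms
proof (induction W)
  case Nil then show ?case by simp
next
  case (Cons x W)
  show ?case
  proof (cases W)
    case Nil then show ?thesis using Cons.prems by simp
  next
    case (Cons y W')
    show ?thesis
    proof (cases "y \<in> S")
      case True
      have "successively E W" using Cons.prems(1) \<open>W = y # W'\<close> by simp
      moreover have "last W \<notin> S" using Cons.prems(4) \<open>W = y # W'\<close> by simp
      ultimately obtain u v where "u \<in> S \<and> v \<notin> S \<and> u \<in> set W \<and> v \<in> set W \<and> E u v"
        using Cons.IH True \<open>W = y # W'\<close> by auto
      then show ?thesis by auto
    next
      case False
      then show ?thesis using Cons.prems \<open>W = y # W'\<close> by auto
    qed
  qed
qed

lemma arith_core:
  fixes da db dz q n t :: nat
  assumes t5: "t \<ge> 5" and h1: "da+db+dz+2 \<le> n+q" and h2: "da+db+2 \<le> n" and hq: "q + 3 \<le> t"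
   and r1: "real (da+db) > (real t - 3)/(real t - 2) * real n"
   and r2: "real (da+dz) > (real t - 3)/(real t - 2) * real n"
   and r3: "real (db+dz) > (real t - 3)/(real t - 2) * real n"
  shows False
proof -
  define T where "T = real t"
  define m where "m = real n"
  have T5: "T \<ge> 5" using t5 by (simp add: T_def)
  have T2: "T - 2 > 0" using T5 by simp
  have e: "(T - 3)/(T - 2) * m * (T - 2) = (T - 3) * m" using T2 by (simp add: field_simps)
  have i1: "(real da + real db) * (T - 2) > (T - 3) * m"
    using mult_strict_right_mono[OF r1[folded T_def m_def] T2] e by simp
  have i2: "(real da + real dz) * (T - 2) > (T - 3) * m"
    using mult_strict_right_mono[OF r2[folded T_def m_def] T2] e by simp
  have i3: "(real db + real dz) * (T - 2) > (T - 3) * m"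
    using mult_strict_right_mono[OF r3[folded T_def m_def] T2] e by simp
  have h2': "real da + real db \<le> m - 2" using h2 by (simp add: m_def)
  have h1': "real da + real db + real dz \<le> m + T - 5"
  proof -
    have "real da + real db + real dz + 2 \<le> m + real q" using h1 by (simp add: m_def)
    moreover have "real q + 3 \<le> T" using hq by (simp add: T_def)
    ultimately show ?thesis by linarith
  qed
  have j1: "(real da + real db) * (T - 2) \<le> (m - 2) * (T - 2)"
    using mult_right_mono[OF h2'] T2 by simp
  have j2: "(real da + real db + real dz) * (T - 2) \<le> (m + T - 5) * (T - 2)"
    using mult_right_mono[OF h1'] T2 by simp
  have k: "(T - 5) * (2 * T - 4 - m) \<le> 0"
  proof -
    have "m > 2 * T - 4"
    proof -
      have "(m - 2) * (T - 2) > (T - 3) * m" using i1 j1 by linarith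
      then show ?thesis by (simp add: algebra_simps)
    qed
    then show ?thesis using T5 by (intro mult_nonneg_nonpos) auto
  qed
  have "2 * ((m + T - 5) * (T - 2)) > 3 * ((T - 3) * m)"
  proof -
    have "(real da + real db + real dz) * (T - 2) * 2 = (real da + real db) * (T - 2) + (real da + real dz) * (T - 2) + (real db + real dz) * (T - 2)"
      by (simp add: algebra_simps)
    then show ?thesis using i1 i2 i3 j2 by linarith
  qed
  then show False using k by (simp add: algebra_simps)
qed


lemma dcount:
  assumes "finite A" "finite B"
  shows "(\<Sum>x\<in>A. card {y\<in>B. R x y}) = (\<Sum>y\<in>B. card {x\<in>A. R x y})"
proof -
  have c1: "\<And>x. card {y\<in>B. R x y} = (\<Sum>y\<in>B. if R x y then 1 else 0)"
    using sum.inter_filter[OF assms(2), of "\<lambda>_. (1::nat)"] by simp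
  have c2: "\<And>y. card {x\<in>A. R x y} = (\<Sum>x\<in>A. if R x y then 1 else 0)"
    using sum.inter_filter[OF assms(1), of "\<lambda>_. (1::nat)"] by simp
  have "(\<Sum>x\<in>A. card {y\<in>B. R x y}) = (\<Sum>x\<in>A. \<Sum>y\<in>B. if R x y then 1 else 0)"
    using c1 by simp
  also have "\<dots> = (\<Sum>y\<in>B. \<Sum>x\<in>A. if R x y then 1 else 0)" by (rule sum.swap)
  also have "\<dots> = (\<Sum>y\<in>B. card {x\<in>A. R x y})"
    using c2 by simp
  finally show ?thesis .
qed

locale gs =
  fixes V :: "'a set" and E :: "'a \<Rightarrow> 'a \<Rightarrow> bool" and t :: nat
  assumes t5: "t \<ge> 5" and sg: "simple_graph V E" and conn: "connected_graph V E"
    and sig: "sigma2_gt V E ((real t - 3) / (real t - 2) * real (card V))"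
    and nostar: "\<not> has_induced_star V E t"
    and noham: "\<not> (\<exists>p. hamiltonian_path V E p)"
begin

definition N where "N x = {y\<in>V. E x y}"
definition pth where "pth L \<longleftrightarrow> L \<noteq> [] \<and> set L \<subseteq> V \<and> successively E L \<and> distinct L"
definition longest where "longest L \<longleftrightarrow> pth L \<and> (\<forall>L'. pth L' \<longrightarrow> length L' \<le> length L)"

lemma fin: "finite V" using sg by (simp add: simple_graph_def)
lemma sym: "E x y \<Longrightarrow> E y x" using sg by (simp add: simple_graph_def)
lemma irr: "\<not> E x x" using sg by (simp add: simple_graph_def)
lemma inV1: "E x y \<Longrightarrow> x \<in> V" using sg by (simp add: simple_graph_def)
lemma inV2: "E x y \<Longrightarrow> y \<in> V" using sg by (simp add: simple_graph_def)

lemma finN: "finite (N x)" using fin by (simp add: N_def)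
lemma deg: "degree V E x = card (N x)" by (simp add: degree_def N_def)

lemma pth_len: assumes "pth L" shows "length L \<le> card V"
proof -
  have "length L = card (set L)" using assms by (simp add: pth_def distinct_card)
  also have "\<dots> \<le> card V" using assms fin by (intro card_mono) (auto simp: pth_def)
  finally show ?thesis .
qed

lemma exists_longest: "\<exists>P. longest P"
proof -
  obtain v where v: "v \<in> V" using conn by (auto simp: connected_graph_def)
  have "pth [v]" using v by (simp add: pth_def)
  then have h1: "\<exists>L. pth L \<and> length L = 1" by force
  have h2: "\<forall>y. (\<exists>L. pth L \<and> length L = y) \<longrightarrow> y \<le> card V" using pth_len by blast
  obtain k where k: "\<exists>L. pth L \<and> length L = k" and km: "\<forall>y. (\<exists>L. pth L \<and> length L = y) \<longrightarrow> y \<le> k"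
    using Nat.ex_has_greatest_nat[where P="\<lambda>k. \<exists>L. pth L \<and> length L = k", OF h1 h2] by blast
  obtain L where L: "pth L" "length L = k" using k by blast
  have "longest L" unfolding longest_def using L km by auto
  then show ?thesis by blast
qed

lemma longer: "longest Q \<Longrightarrow> pth L \<Longrightarrow> length L > length Q \<Longrightarrow> False"
  unfolding longest_def by force

lemma pth_rev: "pth L \<Longrightarrow> pth (rev L)"
  unfolding pth_def by (auto intro: successively_mono sym)

lemma longest_rev: "longest Q \<Longrightarrow> longest (rev Q)"
  unfolding longest_def using pth_rev by auto

lemma hd_nbr: assumes "longest Q" "E (hd Q) y" shows "y \<in> set Q"
proof (rule ccontr)
  assume "y \<notin> set Q"
  have "pth (y # Q)" using assms \<open>y \<notin> set Q\<close> inV2[of "hd Q" y]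
    by (auto simp: longest_def pth_def successively_Cons intro: sym)
  then show False using longer[OF assms(1)] by force
qed

lemma last_nbr: assumes "longest Q" "E (last Q) y" shows "y \<in> set Q"
proof -
  have "Q \<noteq> []" using assms by (simp add: longest_def pth_def)
  then show ?thesis using hd_nbr[OF longest_rev[OF assms(1)]] assms(2) by (simp add: hd_rev)
qed

lemma outside: assumes "longest Q" shows "\<exists>z\<in>V. z \<notin> set Q"
proof (rule ccontr)
  assume "\<not> ?thesis"
  then have "set Q = V" using assms by (auto simp: longest_def pth_def)
  then have "hamiltonian_path V E Q" using assms
    by (auto simp: hamiltonian_path_def walk_iff longest_def pth_def)
  then show False using noham by blast
qed

lemma edge_out: assumes "longest Q" "z \<in> V" "z \<notin> set Q"
  shows "\<exists>u v. u \<in> set Q \<and> v \<in> V \<and> v \<notin> set Q \<and> E u v"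
proof -
  have Q: "Q \<noteq> []" "set Q \<subseteq> V" using assms by (auto simp: longest_def pth_def)
  then have "hd Q \<in> V" by auto
  then obtain W where W: "is_walk V E W" "hd W = hd Q" "last W = z"
    using conn assms(2) by (auto simp: connected_graph_def)
  then have "successively E W" "W \<noteq> []" "set W \<subseteq> V" by (auto simp: walk_iff)
  moreover have "hd W \<in> set Q" using W Q by simp
  ultimately obtain u v where "u \<in> set Q" "v \<notin> set Q" "v \<in> set W" "E u v"
    using succ_cross[of E W "set Q"] W assms by blast
  then show ?thesis using \<open>set W \<subseteq> V\<close> by blast
qed

lemma cycle_contra:
  assumes "longest Q" "distinct C" "set C = set Q" "successively E C" "E (last C) (hd C)"
  shows False
proof -
  obtain z where z: "z \<in> V" "z \<notin> set Q" using outside[OF assms(1)] by blast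
  obtain x y where xy: "x \<in> set Q" "y \<in> V" "y \<notin> set Q" "E x y" using edge_out[OF assms(1) z] by blast
  obtain A B where C: "C = A @ x # B" using split_list[of x C] xy assms(3) by auto
  let ?L = "y # (x # B) @ A"
  have sQ: "set Q \<subseteq> V" using assms(1) by (auto simp: longest_def pth_def)
  have "successively E ?L"
  proof -
    have "successively E (x # B)" "successively E A"
      using assms(4) C by (auto simp: successively_append_iff)
    moreover have "A \<noteq> [] \<Longrightarrow> E (last (x # B)) (hd A)"
      using assms(5) C by (auto simp: hd_append)
    ultimately have "successively E ((x # B) @ A)"
      unfolding successively_append_iff by blast
    then show ?thesis using xy(4) sym by (simp add: successively_Cons)
  qed
  moreover have "distinct ?L" using assms(2,3) C xy by auto
  moreover have "set ?L \<subseteq> V" using assms(3) C xy sQ by auto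
  ultimately have pL: "pth ?L" by (simp add: pth_def)
  have "length C = length Q" using assms(1,2,3)
    by (metis distinct_card longest_def pth_def)
  then have "length ?L = Suc (length Q)" using C by simp
  then show False using longer[OF assms(1) pL] by simp
qed

lemma sc_app: "successively E xs \<Longrightarrow> successively E ys \<Longrightarrow> (xs \<noteq> [] \<Longrightarrow> ys \<noteq> [] \<Longrightarrow> E (last xs) (hd ys)) \<Longrightarrow> successively E (xs @ ys)"
  unfolding successively_append_iff by blast

lemma sc_rev: "successively E xs \<Longrightarrow> successively E (rev xs)"
  by (auto intro: successively_mono sym)

lemma sc_split: "successively E (A @ B) \<Longrightarrow> successively E A \<and> successively E B"
  by (simp add: successively_append_iff)

lemma lpth: "longest Q \<Longrightarrow> Q \<noteq> [] \<and> set Q \<subseteq> V \<and> successively E Q \<and> distinct Q"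
  by (simp add: longest_def pth_def)

lemma no_cross:
  assumes "longest Q" "Q = A @ B" "A \<noteq> []" "B \<noteq> []" "E (last A) (last Q)" "E (hd Q) (hd B)"
  shows False
proof -
  have Q: "successively E (A @ B)" "distinct (A @ B)" using lpth[OF assms(1)] assms(2) by auto
  have sA: "successively E A" and sB: "successively E B" using sc_split[OF Q(1)] by auto
  have s1: "successively E (rev B)" using sc_rev[OF sB] .
  have lQ: "last Q = last B" using assms(2,4) by simp
  have hQ: "hd Q = hd A" using assms(2,3) by simp
  have j: "E (last A) (hd (rev B))" using assms(4,5) lQ by (simp add: hd_rev)
  have s2: "successively E (A @ rev B)" using sc_app[OF sA s1] j by blast
  have l2: "last (A @ rev B) = hd B" using assms(4) by (simp add: last_rev)
  have h2: "hd (A @ rev B) = hd A" using assms(3) by simp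
  have e2: "E (last (A @ rev B)) (hd (A @ rev B))" using assms(6) hQ l2 h2 sym by metis
  have d2: "distinct (A @ rev B)" using Q(2) by simp
  have st: "set (A @ rev B) = set Q" using assms(2) by simp
  show False using cycle_contra[OF assms(1) d2 st s2 e2] .
qed

lemma hd_last_nonadj: assumes "longest Q" "length Q \<ge> 2" shows "\<not> E (hd Q) (last Q)"
proof
  assume e: "E (hd Q) (last Q)"
  have ne: "Q \<noteq> []" using assms(2) by auto
  define A where "A = butlast Q"
  have Q: "Q = A @ [last Q]" using ne by (simp add: A_def)
  have "length A = length Q - 1" by (simp add: A_def)
  then have An: "A \<noteq> []" using assms(2) by (metis One_nat_def Suc_1 Suc_le_eq diff_is_0_eq not_less length_0_conv)
  have s: "successively E (A @ [last Q])" using lpth[OF assms(1)] Q by metis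
  have "E (last A) (last Q)" using s An by (simp add: successively_append_iff)
  then show False using no_cross[OF assms(1) Q An] e by simp
qed

lemma insert_contra:
  assumes "longest Q" "Q = A @ B" "A \<noteq> []" "B \<noteq> []" "z \<in> V" "z \<notin> set Q" "E z (last A)" "E z (hd B)"
  shows False
proof -
  have Q: "successively E (A @ B)" "distinct (A @ B)" "set (A @ B) \<subseteq> V" using lpth[OF assms(1)] assms(2) by auto
  have sA: "successively E A" and sB: "successively E B" using sc_split[OF Q(1)] by auto
  have s1: "successively E (z # B)" using sB assms(8) by (simp add: successively_Cons)
  have j: "E (last A) (hd (z # B))" using assms(7) sym by simp
  have s2: "successively E (A @ z # B)" using sc_app[OF sA s1] j by blast
  have pL: "pth (A @ z # B)" using s2 Q assms(5,6,2) by (auto simp: pth_def)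
  have "length Q < length (A @ z # B)" using assms(2) by simp
  from longer[OF assms(1) pL this] show False .
qed

lemma front_contra:
  assumes "longest Q" "Q = A @ B" "A \<noteq> []" "B \<noteq> []" "z \<in> V" "z \<notin> set Q" "E z (last A)" "E (hd Q) (hd B)"
  shows False
proof -
  have Q: "successively E (A @ B)" "distinct (A @ B)" "set (A @ B) \<subseteq> V" using lpth[OF assms(1)] assms(2) by auto
  have sA: "successively E A" and sB: "successively E B" using sc_split[OF Q(1)] by auto
  have s1: "successively E (rev A)" using sc_rev[OF sA] .
  have hQ: "hd Q = hd A" using assms(2,3) by simp
  have j: "E (last (rev A)) (hd B)" using assms(3,8) hQ by (simp add: last_rev)
  have s2: "successively E (rev A @ B)" using sc_app[OF s1 sB] j by blast
  have j2: "E z (hd (rev A @ B))" using assms(3,7) by (simp add: hd_rev)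
  have s3: "successively E (z # rev A @ B)" using s2 j2 by (simp add: successively_Cons)
  have pL: "pth (z # rev A @ B)" using s3 Q assms(5,6,2) by (auto simp: pth_def)
  have "length Q < length (z # rev A @ B)" using assms(2) by simp
  from longer[OF assms(1) pL this] show False .
qed

lemma back_contra:
  assumes "longest Q" "Q = A @ B" "A \<noteq> []" "B \<noteq> []" "z \<in> V" "z \<notin> set Q" "E z (hd B)" "E (last Q) (last A)"
  shows False
proof -
  have r: "rev Q = rev B @ rev A" using assms(2) by simp
  have r1: "rev B \<noteq> []" "rev A \<noteq> []" using assms(3,4) by auto
  have r2: "E z (last (rev B))" using assms(4,7) by (simp add: last_rev)
  have r3: "E (hd (rev Q)) (hd (rev A))" using assms(2,3,4,8) by (simp add: hd_rev)
  have r4: "z \<notin> set (rev Q)" using assms(6) by simp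
  show False using front_contra[OF longest_rev[OF assms(1)] r r1 assms(5) r4 r2 r3] .
qed

lemma rot_longest:
  assumes "longest Q" "Q = A @ B" "A \<noteq> []" "B \<noteq> []" "E (hd Q) (hd B)"
  shows "longest (rev A @ B)"
proof -
  have Q: "successively E (A @ B)" "distinct (A @ B)" "set (A @ B) \<subseteq> V" using lpth[OF assms(1)] assms(2) by auto
  have sA: "successively E A" and sB: "successively E B" using sc_split[OF Q(1)] by auto
  have s1: "successively E (rev A)" using sc_rev[OF sA] .
  have hQ: "hd Q = hd A" using assms(2,3) by simp
  have j: "E (last (rev A)) (hd B)" using assms(3,5) hQ by (simp add: last_rev)
  have s2: "successively E (rev A @ B)" using sc_app[OF s1 sB] j by blast
  have "pth (rev A @ B)" using s2 Q assms(3) by (auto simp: pth_def)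
  moreover have "length (rev A @ B) = length Q" using assms(2) by simp
  ultimately show ?thesis using assms(1) unfolding longest_def by simp
qed

lemma e_indep_contra:
  assumes "longest Q" "Q = A @ B @ C" "A \<noteq> []" "B \<noteq> []" "C \<noteq> []" "z \<in> V" "z \<notin> set Q"
    "E (hd A) (hd C)" "E (last A) (last B)" "E z (hd B)"
  shows False
proof -
  have Q: "successively E (A @ B @ C)" "distinct (A @ B @ C)" "set (A @ B @ C) \<subseteq> V"
    using lpth[OF assms(1)] assms(2) by auto
  have sA: "successively E A" and sBC: "successively E (B @ C)" using sc_split[OF Q(1)] by auto
  have sB: "successively E B" and sC: "successively E C" using sc_split[OF sBC] by auto
  have s1: "successively E (rev B @ [z])"
    using sc_app[OF sc_rev[OF sB], of "[z]"] assms(4,10) sym by (simp add: last_rev)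
  have s2: "successively E (A @ rev B @ [z])"
    using sc_app[OF sA s1] assms(4,9) by (simp add: hd_rev)
  have s3: "successively E (rev C @ A @ rev B @ [z])"
    using sc_app[OF sc_rev[OF sC] s2] assms(3,5,8) sym by (simp add: last_rev)
  have pL: "pth (rev C @ A @ rev B @ [z])" using s3 Q assms(2,6,7) by (auto simp: pth_def)
  have "length Q < length (rev C @ A @ rev B @ [z])" using assms(2) by simp
  from longer[OF assms(1) pL this] show False .
qed

lemma split_at:
  assumes "Suc j < length Q"
  shows "Q = take (Suc j) Q @ drop (Suc j) Q" "take (Suc j) Q \<noteq> []" "drop (Suc j) Q \<noteq> []"
    "last (take (Suc j) Q) = Q ! j" "hd (drop (Suc j) Q) = Q ! Suc j"
proof -
  show "Q = take (Suc j) Q @ drop (Suc j) Q" by simp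
  show "take (Suc j) Q \<noteq> []" using assms by auto
  show "drop (Suc j) Q \<noteq> []" using assms by auto
  show "last (take (Suc j) Q) = Q ! j" using assms by (simp add: take_Suc_conv_app_nth)
  show "hd (drop (Suc j) Q) = Q ! Suc j" using assms by (simp add: hd_drop_conv_nth)
qed

lemma card_idx:
  assumes "distinct Q" "S \<subseteq> set Q"
  shows "card S = card {i. i < length Q \<and> Q ! i \<in> S}"
proof -
  have "S \<subseteq> (nth Q) ` {i. i < length Q \<and> Q ! i \<in> S}"
  proof
    fix x assume x: "x \<in> S"
    then obtain i where i: "i < length Q" "Q ! i = x" using assms(2) by (meson in_set_conv_nth subsetD)
    show "x \<in> (nth Q) ` {i. i < length Q \<and> Q ! i \<in> S}"
      by (rule image_eqI[of _ _ i]) (use i x in auto)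
  qed
  then have "S = (nth Q) ` {i. i < length Q \<and> Q ! i \<in> S}" by auto
  moreover have "inj_on (nth Q) {i. i < length Q \<and> Q ! i \<in> S}"
    using assms(1) by (intro inj_on_nth) auto
  ultimately show ?thesis by (metis card_image)
qed

lemma len2: assumes "longest Q" shows "length Q \<ge> 2"
proof (rule ccontr)
  assume nt: "\<not> ?thesis"
  have "Q \<noteq> []" using lpth[OF assms] by simp
  then have "0 < length Q" by simp
  then have "length Q = 1" using nt by linarith
  then obtain a where Q: "Q = [a]" by (metis One_nat_def length_0_conv length_Suc_conv)
  obtain z where z: "z \<in> V" "z \<notin> set Q" using outside[OF assms] by blast
  obtain u v where uv: "u \<in> set Q" "v \<notin> set Q" "E u v" using edge_out[OF assms z] by blast
  then have "u = hd Q" using Q by simp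
  then show False using hd_nbr[OF assms] uv by blast
qed

lemma triple:
  assumes Ql: "longest Q" and z: "z \<in> V" "z \<notin> set Q"
  shows "card (N (hd Q)) + card (N (last Q)) + card (N z) + 2 \<le> card V + card (N (hd Q) \<inter> N (last Q) \<inter> N z)"
    and "card (N (hd Q)) + card (N (last Q)) + 2 \<le> card V"
proof -
  define p where "p = length Q"
  define a where "a = hd Q"
  define b where "b = last Q"
  have p2: "p \<ge> 2" using len2[OF Ql] by (simp add: p_def)
  have Qp: "Q \<noteq> []" "set Q \<subseteq> V" "successively E Q" "distinct Q" using lpth[OF Ql] by auto
  have a0: "a = Q ! 0" using Qp by (simp add: a_def hd_conv_nth)
  have bp: "b = Q ! (p - 1)" using Qp by (simp add: b_def p_def last_conv_nth)
  have Na: "N a \<subseteq> set Q" using hd_nbr[OF Ql] by (auto simp: N_def a_def)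
  have Nb: "N b \<subseteq> set Q" using last_nbr[OF Ql] by (auto simp: N_def b_def)
  define Ia where "Ia = {i. i < p \<and> E a (Q ! i)}"
  define Ib where "Ib = {i. i < p \<and> E b (Q ! i)}"
  define Iz where "Iz = {i. i < p \<and> E z (Q ! i)}"
  have inQ: "\<And>i. i < p \<Longrightarrow> Q ! i \<in> V" using Qp by (auto simp: p_def)
  have cIa: "card (N a) = card Ia"
  proof -
    have "{i. i < length Q \<and> Q ! i \<in> N a} = Ia" using inQ by (auto simp: Ia_def N_def p_def)
    then show ?thesis using card_idx[OF Qp(4) Na] by simp
  qed
  have cIb: "card (N b) = card Ib"
  proof -
    have "{i. i < length Q \<and> Q ! i \<in> N b} = Ib" using inQ by (auto simp: Ib_def N_def p_def)
    then show ?thesis using card_idx[OF Qp(4) Nb] by simp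
  qed
  have cW: "card (N a \<inter> N b \<inter> N z) = card (Ia \<inter> Ib \<inter> Iz)"
  proof -
    have s1: "N a \<inter> N b \<inter> N z \<subseteq> set Q" using Na by blast
    have "{i. i < length Q \<and> Q ! i \<in> N a \<inter> N b \<inter> N z} = Ia \<inter> Ib \<inter> Iz"
      using inQ by (auto simp: Ia_def Ib_def Iz_def N_def p_def)
    then show ?thesis using card_idx[OF Qp(4) s1] by simp
  qed
  have cIz: "card (N z \<inter> set Q) = card Iz"
  proof -
    have s1: "N z \<inter> set Q \<subseteq> set Q" by blast
    have "{i. i < length Q \<and> Q ! i \<in> N z \<inter> set Q} = Iz"
      using inQ by (auto simp: Iz_def N_def p_def)
    then show ?thesis using card_idx[OF Qp(4) s1] by simp
  qed
  have nza: "\<not> E z a" using hd_nbr[OF Ql] z sym by (auto simp: a_def)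
  have nzb: "\<not> E z b" using last_nbr[OF Ql] z sym by (auto simp: b_def)
  have Ia1: "Ia \<subseteq> {1..<p}"
  proof
    fix i assume i: "i \<in> Ia"
    have "i \<noteq> 0"
    proof
      assume "i = 0" then show False using i irr[of a] a0 by (simp add: Ia_def)
    qed
    then show "i \<in> {1..<p}" using i by (auto simp: Ia_def)
  qed
  have Ib1: "Ib \<subseteq> {..<p-1}"
  proof
    fix i assume i: "i \<in> Ib"
    have "i \<noteq> p - 1"
    proof
      assume "i = p - 1" then show False using i irr[of b] bp by (simp add: Ib_def)
    qed
    then show "i \<in> {..<p-1}" using i by (auto simp: Ib_def)
  qed
  define Y where "Y = Suc ` Ib"
  have cY: "card Y = card Ib" unfolding Y_def by (simp add: card_image)
  have Y1: "Y \<subseteq> {1..<p}" using Ib1 by (auto simp: Y_def)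
  have disj: "Ia \<inter> Y = {}"
  proof (rule ccontr)
    assume "Ia \<inter> Y \<noteq> {}"
    then obtain j where j: "Suc j \<in> Ia" "j \<in> Ib" by (auto simp: Y_def)
    then have jp: "Suc j < length Q" by (simp add: Ia_def p_def)
    note sp = split_at[OF jp]
    have e1: "E (last (take (Suc j) Q)) (last Q)" using j sym by (simp add: sp(4) Ib_def b_def)
    have e2: "E (hd Q) (hd (drop (Suc j) Q))" using j by (simp add: sp(5) Ia_def a_def)
    show False using no_cross[OF Ql sp(1,2,3) e1 e2] .
  qed
  define F where "F = {1..<p} - (Ia \<union> Y)"
  have finIa: "finite Ia" and finY: "finite Y" using Ia1 Y1 by (auto intro: finite_subset)
  have finF: "finite F" by (simp add: F_def)
  have cF: "card Ia + card Y + card F = p - 1"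
  proof -
    have u: "{1..<p} = (Ia \<union> Y) \<union> F" using Ia1 Y1 by (auto simp: F_def)
    have d2: "(Ia \<union> Y) \<inter> F = {}" by (auto simp: F_def)
    have "card {1..<p} = card (Ia \<union> Y) + card F"
      using u d2 finIa finY finF by (metis card_Un_disjoint finite_UnI)
    moreover have "card (Ia \<union> Y) = card Ia + card Y" using disj finIa finY by (simp add: card_Un_disjoint)
    ultimately show ?thesis by simp
  qed
  define K1 where "K1 = {i\<in>Iz. i \<notin> Ia}"
  define K2 where "K2 = {i\<in>Iz. i \<in> Ia \<and> i \<notin> Ib}"
  have Iz1: "Iz \<subseteq> {1..<p-1}"
  proof
    fix i assume i: "i \<in> Iz"
    have "i \<noteq> 0"
    proof
      assume "i = 0" then show False using i nza a0 by (simp add: Iz_def)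
    qed
    moreover have "i \<noteq> p - 1"
    proof
      assume "i = p - 1" then show False using i nzb bp by (simp add: Iz_def)
    qed
    ultimately show "i \<in> {1..<p-1}" using i by (auto simp: Iz_def)
  qed
  have K1F: "K1 \<subseteq> F"
  proof
    fix i assume i: "i \<in> K1"
    have "i \<notin> Y"
    proof
      assume "i \<in> Y"
      then obtain j where j: "i = Suc j" "j \<in> Ib" by (auto simp: Y_def)
      have "i \<in> Iz" using i by (simp add: K1_def)
      then have "i \<in> {1..<p-1}" using Iz1 by blast
      then have jp: "Suc j < length Q" using j by (auto simp: p_def)
      note sp = split_at[OF jp]
      have e1: "E z (hd (drop (Suc j) Q))" using i j by (simp add: sp(5) K1_def Iz_def)
      have e2: "E (last Q) (last (take (Suc j) Q))" using j by (simp add: sp(4) Ib_def b_def)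
      show False using back_contra[OF Ql sp(1,2,3) z e1 e2] .
    qed
    then show "i \<in> F" using i Iz1 by (auto simp: F_def K1_def Iz_def)
  qed
  have K2F: "Suc ` K2 \<subseteq> F"
  proof
    fix i' assume "i' \<in> Suc ` K2"
    then obtain i where i: "i' = Suc i" "i \<in> K2" by blast
    then have "i \<in> Iz" by (simp add: K2_def)
    then have "i \<in> {1..<p-1}" using Iz1 by blast
    then have ip: "Suc i < length Q" by (auto simp: p_def)
    note sp = split_at[OF ip]
    have "Suc i \<notin> Ia"
    proof
      assume si: "Suc i \<in> Ia"
      have e1: "E z (last (take (Suc i) Q))" using i by (simp add: sp(4) K2_def Iz_def)
      have e2: "E (hd Q) (hd (drop (Suc i) Q))" using si by (simp add: sp(5) Ia_def a_def)
      show False using front_contra[OF Ql sp(1,2,3) z e1 e2] .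
    qed
    moreover have "Suc i \<notin> Y" using i by (auto simp: Y_def K2_def)
    ultimately show "i' \<in> F" using ip i by (auto simp: F_def p_def)
  qed
  have K12: "K1 \<inter> Suc ` K2 = {}"
  proof (rule ccontr)
    assume "K1 \<inter> Suc ` K2 \<noteq> {}"
    then obtain i where i: "Suc i \<in> Iz" "i \<in> Iz" by (auto simp: K1_def K2_def)
    then have ip: "Suc i < length Q" by (simp add: Iz_def p_def)
    note sp = split_at[OF ip]
    have e1: "E z (last (take (Suc i) Q))" using i by (simp add: sp(4) Iz_def)
    have e2: "E z (hd (drop (Suc i) Q))" using i by (simp add: sp(5) Iz_def)
    show False using insert_contra[OF Ql sp(1,2,3) z e1 e2] .
  qed
  have finIz: "finite Iz" by (simp add: Iz_def)
  have finK1: "finite K1" and finK2: "finite K2" using finIz by (auto simp: K1_def K2_def)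
  have "card K1 + card K2 \<le> card F"
  proof -
    have "card K1 + card (Suc ` K2) = card (K1 \<union> Suc ` K2)"
      using K12 finK1 finK2 by (simp add: card_Un_disjoint)
    also have "\<dots> \<le> card F" using K1F K2F finF by (intro card_mono) auto
    finally show ?thesis by (simp add: card_image)
  qed
  moreover have "card Iz \<le> card (Ia \<inter> Ib \<inter> Iz) + card K1 + card K2"
  proof -
    have "Iz \<subseteq> (Ia \<inter> Ib \<inter> Iz) \<union> K1 \<union> K2" by (auto simp: K1_def K2_def)
    then have "card Iz \<le> card ((Ia \<inter> Ib \<inter> Iz) \<union> K1 \<union> K2)"
      using finIz finK1 finK2 by (intro card_mono) auto
    also have "\<dots> \<le> card (Ia \<inter> Ib \<inter> Iz \<union> K1) + card K2" by (rule card_Un_le)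
    also have "\<dots> \<le> card (Ia \<inter> Ib \<inter> Iz) + card K1 + card K2" using card_Un_le by simp
    finally show ?thesis .
  qed
  ultimately have Izb: "card Iz \<le> card (Ia \<inter> Ib \<inter> Iz) + card F" by linarith
  have cQ: "card (set Q) = p" using Qp by (simp add: distinct_card p_def)
  have out: "card (N z - set Q) + p + 1 \<le> card V"
  proof -
    have "N z - set Q \<subseteq> V - set Q - {z}" using irr by (auto simp: N_def)
    then have c1: "card (N z - set Q) \<le> card (V - set Q - {z})" using fin by (intro card_mono) auto
    have c2: "card (V - set Q - {z}) = card (V - set Q) - 1" using z by (intro card_Diff_singleton) auto
    have c3: "card (V - set Q) = card V - p" using Qp(2) fin cQ by (simp add: card_Diff_subset)
    have "set Q \<subset> V" using Qp(2) z by auto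
    then have c4: "p < card V" using fin cQ psubset_card_mono by metis
    show ?thesis using c1 c2 c3 c4 by linarith
  qed
  have cNz: "card (N z) = card (N z \<inter> set Q) + card (N z - set Q)"
    using finN[of z] by (rule card_Int_Diff)
  show "card (N (hd Q)) + card (N (last Q)) + card (N z) + 2 \<le> card V + card (N (hd Q) \<inter> N (last Q) \<inter> N z)"
    using cIa cIb cW cIz cNz cY cF Izb out p2 unfolding a_def[symmetric] b_def[symmetric] by linarith
  show "card (N (hd Q)) + card (N (last Q)) + 2 \<le> card V"
    using cIa cIb cY cF out p2 unfolding a_def[symmetric] b_def[symmetric] by linarith
qed

lemma common:
  assumes Ql: "longest Q" and z: "z \<in> V" "z \<notin> set Q"
  shows "t - 2 \<le> card (N (hd Q) \<inter> N (last Q) \<inter> N z)"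
proof (rule ccontr)
  assume nq: "\<not> ?thesis"
  define a where "a = hd Q"
  define b where "b = last Q"
  have Qp: "Q \<noteq> []" "set Q \<subseteq> V" "successively E Q" "distinct Q" using lpth[OF Ql] by auto
  have l2: "length Q \<ge> 2" using len2[OF Ql] .
  have ab: "a \<noteq> b"
  proof
    assume "a = b"
    then have "Q ! 0 = Q ! (length Q - 1)" using Qp by (simp add: a_def b_def hd_conv_nth last_conv_nth)
    moreover have "(Q ! 0 = Q ! (length Q - 1)) = (0 = length Q - 1)"
      by (rule nth_eq_iff_index_eq[OF Qp(4)]) (use l2 in auto)
    ultimately have "0 = length Q - 1" by simp
    then show False using l2 by simp
  qed
  have aV: "a \<in> V" and bV: "b \<in> V" using Qp by (auto simp: a_def b_def)
  have nab: "\<not> E a b" using hd_last_nonadj[OF Ql l2] by (simp add: a_def b_def)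
  have naz: "\<not> E a z" using hd_nbr[OF Ql] z by (auto simp: a_def)
  have nbz: "\<not> E b z" using last_nbr[OF Ql] z by (auto simp: b_def)
  have az: "a \<noteq> z" and bz: "b \<noteq> z" using z Qp by (auto simp: a_def b_def)
  have S: "\<And>x y. x \<in> V \<Longrightarrow> y \<in> V \<Longrightarrow> x \<noteq> y \<Longrightarrow> \<not> E x y \<Longrightarrow>
      real (card (N x) + card (N y)) > (real t - 3) / (real t - 2) * real (card V)"
    using sig by (simp add: sigma2_gt_def deg)
  have r1: "real (card (N a) + card (N b)) > (real t - 3) / (real t - 2) * real (card V)"
    using S[OF aV bV ab nab] .
  have r2: "real (card (N a) + card (N z)) > (real t - 3) / (real t - 2) * real (card V)"
    using S[OF aV z(1) az naz] .
  have r3: "real (card (N b) + card (N z)) > (real t - 3) / (real t - 2) * real (card V)"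
    using S[OF bV z(1) bz nbz] .
  have h1: "card (N a) + card (N b) + card (N z) + 2 \<le> card V + card (N a \<inter> N b \<inter> N z)"
    using triple(1)[OF Ql z] by (simp add: a_def b_def)
  have h2: "card (N a) + card (N b) + 2 \<le> card V"
    using triple(2)[OF Ql z] by (simp add: a_def b_def)
  have hq: "card (N a \<inter> N b \<inter> N z) + 3 \<le> t" using nq t5 unfolding a_def b_def by linarith
  show False using arith_core[OF t5 h1 h2 hq r1 r2 r3] .
qed

lemma key:
  assumes Pl: "longest P" and z: "z \<in> V" "z \<notin> set P"
  shows "(t - 2) * card (N (hd P) \<inter> N z) \<le> (t - 3) * card (N (last P) \<inter> N z)"
proof -
  define p where "p = length P"
  define a where "a = hd P"
  define b where "b = last P"
  define M where "M = N a \<inter> N z"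
  define M' where "M' = N b \<inter> N z"
  have Pp: "P \<noteq> []" "set P \<subseteq> V" "successively E P" "distinct P" using lpth[OF Pl] by auto
  have p2: "p \<ge> 2" using len2[OF Pl] by (simp add: p_def)
  have a0: "a = P ! 0" using Pp by (simp add: a_def hd_conv_nth)
  have bp: "b = P ! (p - 1)" using Pp by (simp add: b_def p_def last_conv_nth)
  have Na: "N a \<subseteq> set P" using hd_nbr[OF Pl] by (auto simp: N_def a_def)
  have MP: "M \<subseteq> set P" using Na by (auto simp: M_def)
  have nzb: "\<not> E z b" using last_nbr[OF Pl] z sym by (auto simp: b_def)
  have bV: "b \<in> V" using Pp by (auto simp: b_def)
  have nbz: "\<not> E b z" using nzb sym by blast
  have bz: "b \<noteq> z" using Pp z by (auto simp: b_def)
  define J where "J = {j. j < p \<and> P ! j \<in> M}"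
  have cM: "card M = card J"
  proof -
    have "{i. i < length P \<and> P ! i \<in> M} = J" by (simp add: J_def p_def)
    then show ?thesis using card_idx[OF Pp(4) MP] by simp
  qed
  have J1: "\<And>j. j \<in> J \<Longrightarrow> 1 \<le> j \<and> Suc j < p"
  proof -
    fix j assume j: "j \<in> J"
    have "j \<noteq> 0"
    proof
      assume "j = 0" then show False using j irr[of a] a0 by (simp add: J_def M_def N_def)
    qed
    moreover have "j \<noteq> p - 1"
    proof
      assume "j = p - 1" then show False using j nzb bp sym by (auto simp: J_def M_def N_def)
    qed
    ultimately show "1 \<le> j \<and> Suc j < p" using j by (auto simp: J_def)
  qed
  define e where "e j = P ! (j - 1)" for j
  define EM where "EM = e ` J"
  have inj: "inj_on e J"
  proof
    fix j l assume j: "j \<in> J" and l: "l \<in> J" and eq: "e j = e l"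
    have "(P ! (j - 1) = P ! (l - 1)) = (j - 1 = l - 1)"
      by (rule nth_eq_iff_index_eq[OF Pp(4)]) (use J1[OF j] J1[OF l] in \<open>auto simp: p_def\<close>)
    then have "j - 1 = l - 1" using eq by (simp add: e_def)
    then show "j = l" using J1[OF j] J1[OF l] by linarith
  qed
  have cEM: "card EM = card M" using inj cM by (simp add: EM_def card_image)
  have rot: "\<And>j. j \<in> J \<Longrightarrow> \<exists>Q'. longest Q' \<and> hd Q' = e j \<and> last Q' = b \<and> set Q' = set P"
  proof -
    fix j assume j: "j \<in> J"
    have jj: "Suc (j - 1) = j" using J1[OF j] by simp
    have jp: "Suc (j - 1) < length P" using J1[OF j] by (simp add: p_def)
    note sp = split_at[OF jp, unfolded jj]
    have ej: "E (hd P) (hd (drop j P))" using j sp(5) by (simp add: J_def M_def N_def a_def)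
    have L: "longest (rev (take j P) @ drop j P)" by (rule rot_longest[OF Pl sp(1,2,3) ej])
    have "hd (rev (take j P) @ drop j P) = e j" using sp(2,4) by (simp add: hd_rev e_def)
    moreover have "last (rev (take j P) @ drop j P) = b" using sp(3) by (simp add: b_def)
    moreover have "set (rev (take j P) @ drop j P) = set P"
      by (metis set_append set_rev append_take_drop_id)
    ultimately show "\<exists>Q'. longest Q' \<and> hd Q' = e j \<and> last Q' = b \<and> set Q' = set P" using L by blast
  qed
  have EMprop: "\<And>x. x \<in> EM \<Longrightarrow> t - 2 \<le> card (N x \<inter> M') \<and> x \<in> V \<and> x \<noteq> b \<and> x \<noteq> z \<and> \<not> E x b \<and> \<not> E x z"
  proof -
    fix x assume "x \<in> EM"
    then obtain j where j: "j \<in> J" "x = e j" by (auto simp: EM_def)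
    obtain Q' where Q': "longest Q'" "hd Q' = x" "last Q' = b" "set Q' = set P" using rot[OF j(1)] j(2) by blast
    have z': "z \<notin> set Q'" using z Q' by simp
    have c: "t - 2 \<le> card (N x \<inter> M')" using common[OF Q'(1) z(1) z'] Q' by (simp add: M'_def Int_assoc)
    have Q'p: "Q' \<noteq> []" "set Q' \<subseteq> V" "distinct Q'" using lpth[OF Q'(1)] by auto
    have xV: "x \<in> V" using Q'p Q'(2) by auto
    have l2: "length Q' \<ge> 2" using len2[OF Q'(1)] .
    have xb: "x \<noteq> b"
    proof
      assume "x = b"
      then have "Q' ! 0 = Q' ! (length Q' - 1)" using Q' Q'p by (simp add: hd_conv_nth last_conv_nth)
      moreover have "(Q' ! 0 = Q' ! (length Q' - 1)) = (0 = length Q' - 1)"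
        by (rule nth_eq_iff_index_eq[OF Q'p(3)]) (use l2 in auto)
      ultimately show False using l2 by simp
    qed
    have xz: "x \<noteq> z" using Q' Q'p z' by auto
    have nxb: "\<not> E x b" using hd_last_nonadj[OF Q'(1) l2] Q' by simp
    have nxz: "\<not> E x z" using hd_nbr[OF Q'(1)] Q' z' by auto
    show "t - 2 \<le> card (N x \<inter> M') \<and> x \<in> V \<and> x \<noteq> b \<and> x \<noteq> z \<and> \<not> E x b \<and> \<not> E x z"
      using c xV xb xz nxb nxz by blast
  qed
  have indep_lt: "\<And>j l. j \<in> J \<Longrightarrow> l \<in> J \<Longrightarrow> j < l \<Longrightarrow> \<not> E (e j) (e l)"
  proof
    fix j l assume j: "j \<in> J" and l: "l \<in> J" and jl: "j < l" and ee: "E (e j) (e l)"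
    define A where "A = take j P"
    define B where "B = take (l - j) (drop j P)"
    define C where "C = drop l P"
    have lp: "l < length P" using J1[OF l] by (simp add: p_def)
    have j1: "1 \<le> j" using J1[OF j] by simp
    have PABC: "P = A @ B @ C"
    proof -
      have "drop (l - j) (drop j P) = C" using jl by (simp add: C_def)
      then have "B @ C = drop j P" by (metis B_def append_take_drop_id)
      then show ?thesis by (simp add: A_def)
    qed
    have lA: "length A = j" using jl lp by (simp add: A_def)
    have lB: "length B = l - j" using jl lp by (simp add: B_def)
    have An: "A \<noteq> []" using lA j1 by auto
    have Bn: "B \<noteq> []" using lB jl by auto
    have Cn: "C \<noteq> []" using lp by (simp add: C_def)
    have hA: "hd A = a" using An by (simp add: A_def a_def hd_take)
    have hC: "hd C = P ! l" using lp by (simp add: C_def hd_drop_conv_nth)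
    have lastA: "last A = e j" using An lA jl lp j1 by (simp add: last_conv_nth A_def e_def)
    have lastB: "last B = e l" using Bn lB jl lp by (simp add: last_conv_nth B_def e_def)
    have hB: "hd B = P ! j" using Bn jl lp by (simp add: hd_conv_nth B_def)
    have e1: "E (hd A) (hd C)" using l hA hC by (simp add: J_def M_def N_def)
    have e2: "E (last A) (last B)" using ee lastA lastB by simp
    have e3: "E z (hd B)" using j hB sym by (auto simp: J_def M_def N_def)
    show False using e_indep_contra[OF Pl PABC An Bn Cn z e1 e2 e3] .
  qed
  have indep: "\<And>x y. x \<in> EM \<Longrightarrow> y \<in> EM \<Longrightarrow> \<not> E x y"
  proof -
    fix x y assume x: "x \<in> EM" and y: "y \<in> EM"
    obtain j where j: "j \<in> J" "x = e j" using x by (auto simp: EM_def)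
    obtain l where l: "l \<in> J" "y = e l" using y by (auto simp: EM_def)
    show "\<not> E x y"
    proof (cases j l rule: linorder_cases)
      case less then show ?thesis using indep_lt[OF j(1) l(1)] j l by simp
    next
      case equal then show ?thesis using j l irr by simp
    next
      case greater then show ?thesis using indep_lt[OF l(1) j(1)] j l sym by blast
    qed
  qed
  have M'V: "M' \<subseteq> V" by (auto simp: M'_def N_def)
  have EMV: "EM \<subseteq> V" using EMprop by blast
  have finEM: "finite EM" and finM': "finite M'" using EMV M'V fin by (auto intro: finite_subset)
  have nostar': "\<And>m. m \<in> M' \<Longrightarrow> card (N m \<inter> EM) \<le> t - 3"
  proof (rule ccontr)
    fix m assume m: "m \<in> M'" and nc: "\<not> card (N m \<inter> EM) \<le> t - 3"
    then have "t - 2 \<le> card (N m \<inter> EM)" using t5 by linarith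
    then obtain S where S: "S \<subseteq> N m \<inter> EM" "card S = t - 2"
      by (meson obtain_subset_with_card_n)
    have finS: "finite S" using S finEM by (auto intro: finite_subset)
    define L where "L = insert b (insert z S)"
    have mV: "m \<in> V" using m M'V by auto
    have bm: "E m b" and zm: "E m z" using m sym by (auto simp: M'_def N_def)
    have LV: "L \<subseteq> V" using S EMV bV z by (auto simp: L_def)
    have zS: "z \<notin> S" using S EMprop by blast
    have bS: "b \<notin> insert z S" using S EMprop bz by blast
    have cL: "card L = t" using S finS zS bS t5 by (simp add: L_def)
    have mL: "m \<notin> L" using bm zm S irr by (auto simp: L_def N_def)
    have adj: "\<forall>x\<in>L. E m x" using bm zm S by (auto simp: L_def N_def)
    have ind: "\<forall>x\<in>L. \<forall>y\<in>L. \<not> E x y"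
    proof (intro ballI)
      fix x y assume x: "x \<in> L" and y: "y \<in> L"
      have sx: "x \<in> S \<Longrightarrow> x \<in> EM" and sy: "y \<in> S \<Longrightarrow> y \<in> EM" using S by auto
      show "\<not> E x y"
        using x y sx sy EMprop indep irr nbz sym unfolding L_def by (metis insert_iff)
    qed
    have "has_induced_star V E t"
      unfolding has_induced_star_def using mV LV mL cL adj ind by blast
    then show False using nostar by blast
  qed
  have "(t - 2) * card EM \<le> (\<Sum>x\<in>EM. card (N x \<inter> M'))"
    using EMprop sum_bounded_below[of EM "t - 2" "\<lambda>x. card (N x \<inter> M')"] by (simp add: mult.commute)
  also have "(\<Sum>x\<in>EM. card (N x \<inter> M')) = (\<Sum>x\<in>EM. card {y\<in>M'. E x y})"
  proof (rule sum.cong)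
    fix x assume "x \<in> EM"
    have "N x \<inter> M' = {y\<in>M'. E x y}" using M'V by (auto simp: N_def)
    then show "card (N x \<inter> M') = card {y\<in>M'. E x y}" by simp
  qed simp
  also have "\<dots> = (\<Sum>y\<in>M'. card {x\<in>EM. E x y})" by (rule dcount[OF finEM finM'])
  also have "\<dots> = (\<Sum>y\<in>M'. card (N y \<inter> EM))"
  proof (rule sum.cong)
    fix y assume "y \<in> M'"
    have "N y \<inter> EM = {x\<in>EM. E x y}" using EMV sym by (auto simp: N_def)
    then show "card {x\<in>EM. E x y} = card (N y \<inter> EM)" by simp
  qed simp
  also have "\<dots> \<le> (t - 3) * card M'"
    using nostar' sum_bounded_above[of M' "\<lambda>y. card (N y \<inter> EM)" "t - 3"] by (simp add: mult.commute)
  finally show ?thesis using cEM by (simp add: M_def M'_def a_def b_def)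
qed

end

theorem theorem2:
  fixes V :: "'a set" and E :: "'a \<Rightarrow> 'a \<Rightarrow> bool" and t :: nat
  assumes "t \<ge> 5"
    and "simple_graph V E"
    and "connected_graph V E"
    and "sigma2_gt V E ((real t - 3) / (real t - 2) * real (card V))"
  shows "(\<exists>p. hamiltonian_path V E p) \<or> has_induced_star V E t"
proof (rule ccontr)
  assume nc: "\<not> ((\<exists>p. hamiltonian_path V E p) \<or> has_induced_star V E t)"
  interpret gs V E t
    using assms nc by unfold_locales auto
  obtain P where P: "longest P" using exists_longest by blast
  obtain z where z: "z \<in> V" "z \<notin> set P" using outside[OF P] by blast
  have Pn: "P \<noteq> []" using lpth[OF P] by simp
  define x where "x = card (N (hd P) \<inter> N z)"
  define y where "y = card (N (last P) \<inter> N z)"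
  have k1: "(t - 2) * x \<le> (t - 3) * y" using key[OF P z] by (simp add: x_def y_def)
  have z': "z \<notin> set (rev P)" using z by simp
  have k2: "(t - 2) * y \<le> (t - 3) * x"
    using key[OF longest_rev[OF P] z(1) z'] Pn by (simp add: x_def y_def hd_rev last_rev)
  have "t - 2 \<le> card (N (hd P) \<inter> N (last P) \<inter> N z)" using common[OF P z] .
  also have "\<dots> \<le> x" unfolding x_def using finN by (intro card_mono) auto
  finally have x1: "t - 2 \<le> x" .
  have t32: "t - 3 \<le> t - 2" by simp
  have "(t - 2) * x \<le> (t - 2) * y" using k1 mult_right_mono[OF t32, of y] by linarith
  then have xy: "x \<le> y" using assms(1) by simp
  have "(t - 2) * y \<le> (t - 2) * x" using k2 mult_right_mono[OF t32, of x] by linarith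
  then have yx: "y \<le> x" using assms(1) by simp
  have x0: "x > 0" using x1 assms(1) by linarith
  have "(t - 3) * x < (t - 2) * x" using x0 assms(1) by simp
  then show False using k1 xy yx by simp
qed

end
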